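(* Let $d\ge 1$ and $s\ge 2$ be integers. If $s\equiv 1\pmod{d+2}$, then there are exactly two $(s,s+1)$-core partitions with $d$-distinct parts of largest size; otherwise there is exactly one such partition of largest size.
   Context: A partition $\lambda=(\lambda_1,\ldots,\lambda_l)$ is a finite nonincreasing sequence of positive integers (the empty partition is allowed); its size is $|\lambda|=\lambda_1+\cdots+\lambda_l$. $\lambda$ is a partition with $d$-distinct parts if $\lambda_i-\lambda_{i+1}\ge d$ for all $1\le i\le l-1$. In the Young diagram of $\lambda$, the hook length of box $(i,j)$ is the number of boxes directly to its right, plus the number directly below it, plus one. $\lambda$ is an $(s,s+1)$-core partition if no box has hook length $s$ or $s+1$. "Of largest size" means of maximum size among all $(s,s+1)$-core partitions with $d$-distinct parts. *)

theory Defs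
  imports Main
begin

definition is_partition :: "nat list \<Rightarrow> bool" where
  "is_partition la \<longleftrightarrow> sorted_wrt (\<ge>) la \<and> (\<forall>x \<in> set la. 0 < x)"

definition psize :: "nat list \<Rightarrow> nat" where
  "psize la = sum_list la"

definition d_distinct :: "nat \<Rightarrow> nat list \<Rightarrow> bool" where
  "d_distinct d la \<longleftrightarrow> (\<forall>i. Suc i < length la \<longrightarrow> la ! (Suc i) + d \<le> la ! i)"

definition conj_part :: "nat list \<Rightarrow> nat \<Rightarrow> nat" where
  "conj_part la j = length (filter (\<lambda>x. j < x) la)"

definition in_diagram :: "nat list \<Rightarrow> nat \<Rightarrow> nat \<Rightarrow> bool" where
  "in_diagram la i j \<longleftrightarrow> i < length la \<and> j < la ! i"

definition hook_length :: "nat list \<Rightarrow> nat \<Rightarrow> nat \<Rightarrow> nat" where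
  "hook_length la i j = (la ! i - Suc j) + (conj_part la j - Suc i) + 1"

definition is_core :: "nat \<Rightarrow> nat list \<Rightarrow> bool" where
  "is_core t la \<longleftrightarrow> (\<forall>i j. in_diagram la i j \<longrightarrow> hook_length la i j \<noteq> t)"

definition core_dd :: "nat \<Rightarrow> nat \<Rightarrow> nat list set" where
  "core_dd s d = {la. is_partition la \<and> d_distinct d la \<and> is_core s la \<and> is_core (s+1) la}"

end

theory Submission
  imports Defs
begin

lemma dd_nth:
  "d_distinct d la \<Longrightarrow> j < length la \<Longrightarrow> i \<le> j \<Longrightarrow> la!j + (j-i)*d \<le> la!i"
proof (induction j)
  case 0
  then show ?case by simp
next
  case (Suc j)
  show ?case
  proof (cases "i = Suc j")
    case True then show ?thesis by simp
  next
    case False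
    then have "i \<le> j" using Suc.prems by simp
    then have IH: "la!j + (j-i)*d \<le> la!i" using Suc by simp
    have "la!(Suc j) + d \<le> la!j" using Suc.prems unfolding d_distinct_def by blast
    moreover have "(Suc j - i)*d = (j-i)*d + d" using \<open>i \<le> j\<close> by (simp add: Suc_diff_le)
    ultimately show ?thesis using IH by simp
  qed
qed

lemma dd_distinct:
  assumes "d_distinct d la" "d \<ge> 1"
  shows "distinct la"
  unfolding distinct_conv_nth
proof (intro allI impI)
  fix i j assume h: "i < length la" "j < length la" "i \<noteq> j"
  show "la!i \<noteq> la!j"
  proof (cases "i < j")
    case True
    have "la!j + (j-i)*d \<le> la!i" using dd_nth[OF assms(1) h(2)] True by simp
    moreover have "(j-i)*d \<ge> 1" using True assms(2) by simp
    ultimately show ?thesis by linarith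
  next
    case False
    then have "j < i" using h by simp
    have "la!i + (i-j)*d \<le> la!j" using dd_nth[OF assms(1) h(1)] \<open>j<i\<close> by simp
    moreover have "(i-j)*d \<ge> 1" using \<open>j<i\<close> assms(2) by simp
    ultimately show ?thesis by linarith
  qed
qed

lemma part_le_hd:
  assumes "is_partition la" "i < length la"
  shows "la!i \<le> la!0"
proof (cases la)
  case Nil then show ?thesis using assms by simp
next
  case (Cons y ys)
  have "\<forall>z\<in>set ys. z \<le> y" using assms(1) Cons unfolding is_partition_def by simp
  then show ?thesis using Cons assms(2) by (cases i) auto
qed

lemma hook_le:
  assumes "is_partition la" "in_diagram la i j"
  shows "hook_length la i j + 1 \<le> la!0 + length la"
proof -
  have "la!i \<le> la!0" using part_le_hd assms unfolding in_diagram_def by blast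
  moreover have "conj_part la j \<le> length la" unfolding conj_part_def by simp
  moreover have "i < length la" "j < la!i" using assms unfolding in_diagram_def by blast+
  ultimately show ?thesis unfolding hook_length_def by linarith
qed

lemma in_core:
  assumes "is_partition la" "la \<noteq> [] \<longrightarrow> la!0 + length la \<le> s" "s \<le> t"
  shows "is_core t la"
  unfolding is_core_def
proof (intro allI impI)
  fix i j assume h: "in_diagram la i j"
  then have "la \<noteq> []" unfolding in_diagram_def by auto
  then show "hook_length la i j \<noteq> t" using hook_le[OF assms(1) h] assms by linarith
qed

lemma ivt:
  "(h::nat\<Rightarrow>nat) 0 \<ge> s \<Longrightarrow> h n < s \<Longrightarrow> (\<forall>j<n. h j \<le> h (Suc j) + 2)
   \<Longrightarrow> \<exists>j<n. h j = s \<or> h j = s+1"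
proof (induction n)
  case 0 then show ?case by simp
next
  case (Suc n)
  show ?case
  proof (cases "h n < s")
    case True
    have "\<forall>j<n. h j \<le> h (Suc j) + 2" using Suc.prems(3) by simp
    then obtain j where "j<n" "h j = s \<or> h j = s+1" using Suc.IH Suc.prems(1) True by blast
    then show ?thesis by (intro exI[of _ j]) simp
  next
    case False
    have "h n \<le> h (Suc n) + 2" using Suc.prems by simp
    then have "h n = s \<or> h n = s+1" using False Suc.prems(2) by linarith
    then show ?thesis by blast
  qed
qed

lemma conj_eq:
  "distinct xs \<Longrightarrow> conj_part xs j = conj_part xs (Suc j) + (if Suc j \<in> set xs then 1 else 0)"
proof (induction xs)
  case Nil then show ?case by (simp add: conj_part_def)
next
  case (Cons a xs)
  then have IH: "conj_part xs j = conj_part xs (Suc j) + (if Suc j \<in> set xs then 1 else 0)"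
    and na: "a \<notin> set xs" by auto
  have e: "conj_part (a#xs) k = (if k < a then 1 else 0) + conj_part xs k" for k
    by (simp add: conj_part_def)
  show ?case
  proof (cases "a = Suc j")
    case True
    then show ?thesis using IH na e[of j] e[of "Suc j"] by auto
  next
    case False
    then show ?thesis using IH e[of j] e[of "Suc j"] by auto
  qed
qed

lemma conj_step:
  "distinct xs \<Longrightarrow> conj_part xs j \<le> conj_part xs (Suc j) + 1"
  using conj_eq[of xs j] by simp

lemma core_top:
  assumes d: "d \<ge> 1" and s2: "s \<ge> 2" and mem: "la \<in> core_dd s d" and ne: "la \<noteq> []"
  shows "la!0 + length la \<le> s"
proof (rule ccontr)
  assume contra: "\<not> la!0 + length la \<le> s"
  define a where "a = la!0"
  define l where "l = length la"
  have P: "is_partition la" and D: "d_distinct d la" and C1: "is_core s la" and C2: "is_core (s+1) la"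
    using mem unfolding core_dd_def by auto
  have dist: "distinct la" using dd_distinct D d by blast
  have pos: "\<forall>x\<in>set la. 0 < x" using P unfolding is_partition_def by blast
  have le_a: "\<forall>x\<in>set la. x \<le> a"
    using part_le_hd[OF P] unfolding a_def by (metis in_set_conv_nth)
  have a_in: "a \<in> set la" unfolding a_def using ne by simp
  have a1: "a \<ge> 1" using pos a_in by auto
  have c0: "conj_part la 0 = l" unfolding conj_part_def l_def using pos by (simp add: filter_True)
  have ca: "conj_part la a = 0" unfolding conj_part_def using le_a by (auto simp: filter_empty_conv)
  have cpos: "conj_part la j \<ge> 1" if "j < a" for j
  proof -
    have "filter (\<lambda>x. j < x) la \<noteq> []" using a_in that by (auto simp: filter_empty_conv)
    then show ?thesis unfolding conj_part_def by (simp add: Suc_le_eq)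
  qed
  define h where "h j = hook_length la 0 j" for j
  have hj: "h j = a - Suc j + conj_part la j" if "j < a" for j
    using cpos[OF that] unfolding h_def hook_length_def a_def by simp
  have h0: "h 0 \<ge> s" using hj[of 0] a1 c0 contra unfolding a_def l_def by simp
  have hend: "h (a - 1) < s"
  proof -
    have "conj_part la (a-1) \<le> conj_part la (Suc (a-1)) + 1" using conj_step[OF dist] .
    then have "conj_part la (a-1) \<le> 1" using ca a1 by simp
    then show ?thesis using hj[of "a-1"] a1 s2 by simp
  qed
  have steps: "\<forall>j<a-1. h j \<le> h (Suc j) + 2"
  proof (intro allI impI)
    fix j assume "j < a - 1"
    then have "j < a" "Suc j < a" by auto
    have "conj_part la j \<le> conj_part la (Suc j) + 1" using conj_step[OF dist] .
    then show "h j \<le> h (Suc j) + 2" using hj[OF \<open>j<a\<close>] hj[OF \<open>Suc j<a\<close>] \<open>Suc j < a\<close> by simp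
  qed
  obtain j where j: "j < a - 1" "h j = s \<or> h j = s+1" using ivt[OF h0 hend steps] by blast
  have "in_diagram la 0 j" unfolding in_diagram_def using ne j(1) unfolding a_def by auto
  then show False using C1 C2 j(2) unfolding is_core_def h_def by blast
qed


definition apf :: "nat \<Rightarrow> nat \<Rightarrow> nat \<Rightarrow> nat list" where
  "apf s d l = map (\<lambda>i. s - l - i*d) [0..<l]"

definition GG :: "nat \<Rightarrow> nat \<Rightarrow> nat \<Rightarrow> int" where
  "GG s d l = 2*int l*(int s - int l) - int d*int l*(int l - 1)"

lemma apf_len[simp]: "length (apf s d l) = l" by (simp add: apf_def)
lemma apf_nth[simp]: "i < l \<Longrightarrow> apf s d l ! i = s - l - i*d" by (simp add: apf_def)

lemma feas_bound:
  fixes l d s i :: nat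
  assumes "l + (l-1)*d < s" "i < l"
  shows "i*d + l < s"
proof -
  have "i \<le> l - 1" using assms(2) by linarith
  then have "i*d \<le> (l-1)*d" by (rule mult_right_mono) simp
  then show ?thesis using assms(1) by linarith
qed

lemma ap_core:
  assumes f: "l + (l-1)*d < s"
  shows "apf s d l \<in> core_dd s d"
proof -
  have P: "is_partition (apf s d l)"
    unfolding is_partition_def
  proof
    show "sorted_wrt (\<ge>) (apf s d l)"
      unfolding sorted_wrt_iff_nth_less
    proof (intro allI impI)
      fix i j assume "i < j" "j < length (apf s d l)"
      then have "i*d \<le> j*d" by simp
      then have "s - (l + j*d) \<le> s - (l + i*d)" by (intro diff_le_mono2) simp
      then show "apf s d l ! j \<le> apf s d l ! i" using \<open>i<j\<close> \<open>j < length (apf s d l)\<close> by simp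
    qed
    show "\<forall>x\<in>set (apf s d l). 0 < x"
    proof
      fix x assume "x \<in> set (apf s d l)"
      then obtain i where "i < l" "x = s - l - i*d" by (auto simp: apf_def)
      then show "0 < x" using feas_bound[OF f \<open>i<l\<close>] by simp
    qed
  qed
  have D: "d_distinct d (apf s d l)"
    unfolding d_distinct_def
  proof (intro allI impI)
    fix i assume "Suc i < length (apf s d l)"
    then have "Suc i < l" by simp
    have "Suc i * d + l < s" using feas_bound[OF f \<open>Suc i < l\<close>] .
    then show "apf s d l ! Suc i + d \<le> apf s d l ! i" using \<open>Suc i < l\<close> by simp
  qed
  have T: "apf s d l \<noteq> [] \<longrightarrow> apf s d l ! 0 + length (apf s d l) \<le> s"
  proof
    assume "apf s d l \<noteq> []"
    then have "0 < l" by (metis apf_len length_greater_0_conv)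
    then show "apf s d l ! 0 + length (apf s d l) \<le> s" using f by simp
  qed
  show ?thesis unfolding core_dd_def using P D in_core[OF P T] by auto
qed

lemma core_bound:
  assumes d: "d \<ge> 1" and s2: "s \<ge> 2" and mem: "la \<in> core_dd s d"
  shows "length la + (length la - 1)*d < s \<and> (\<forall>i<length la. la!i \<le> apf s d (length la) ! i)"
proof (cases "la = []")
  case True then show ?thesis using s2 by simp
next
  case False
  define l where "l = length la"
  have P: "is_partition la" and D: "d_distinct d la" using mem unfolding core_dd_def by auto
  have top: "la!0 + l \<le> s" using core_top[OF d s2 mem False] l_def by simp
  have b: "la!i + i*d \<le> la!0" if "i < l" for i using dd_nth[OF D, of i 0] that l_def by simp
  have lp: "l \<ge> 1" using False l_def by (cases la) auto
  have "la!(l-1) > 0" using P lp l_def unfolding is_partition_def by (simp add: nth_mem)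
  then have "l + (l-1)*d < s" using b[of "l-1"] lp top by simp
  moreover have "\<forall>i<l. la!i \<le> apf s d l ! i" using b top by fastforce
  ultimately show ?thesis using l_def by simp
qed

lemma sum_ap_int:
  "2 * (\<Sum>i<n. (int a - int i * int d)) = 2*int n*int a - int d*int n*(int n - 1)"
  by (induction n) (auto simp: algebra_simps)

lemma psize_ap:
  assumes f: "l + (l-1)*d < s"
  shows "2 * int (psize (apf s d l)) = GG s d l"
proof -
  have "psize (apf s d l) = (\<Sum>i<l. s - l - i*d)"
    unfolding psize_def apf_def by (simp add: sum_list_sum_nth atLeast0LessThan)
  then have e1: "int (psize (apf s d l)) = (\<Sum>i<l. int (s - l - i*d))" by simp
  have e2: "(\<Sum>i<l. int (s - l - i*d)) = (\<Sum>i<l. int (s - l) - int i * int d)"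
  proof (intro sum.cong refl)
    fix x assume "x \<in> {..<l}"
    then have "l + x*d \<le> s" using feas_bound[OF f, of x] by simp
    then show "int (s - l - x*d) = int (s - l) - int x * int d" by (simp add: of_nat_diff)
  qed
  have e: "int (psize (apf s d l)) = (\<Sum>i<l. int (s - l) - int i * int d)" using e1 e2 by simp
  have ls: "l \<le> s" using f by linarith
  show ?thesis unfolding e sum_ap_int[where n=l and a="s-l" and d=d] GG_def using ls by (simp add: of_nat_diff)
qed

lemma psize_cmp:
  assumes "length la = length mu" "\<forall>i<length la. la!i \<le> mu!i"
  shows "psize la \<le> psize mu \<and> (psize la = psize mu \<longrightarrow> la = mu)"
proof -
  have eq: "psize xs = (\<Sum>i<length xs. xs!i)" for xs
    unfolding psize_def by (simp add: sum_list_sum_nth atLeast0LessThan)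
  have le: "psize la \<le> psize mu" unfolding eq assms(1)[symmetric] using assms(2) by (intro sum_mono) simp
  moreover have "la = mu" if "psize la = psize mu"
  proof (rule ccontr)
    assume "la \<noteq> mu"
    then obtain i where "i < length la" "la!i \<noteq> mu!i" using assms(1) nth_equalityI by blast
    then have "la!i < mu!i" using assms(2) by (simp add: order_le_neq_trans)
    then have "psize la < psize mu" unfolding eq assms(1)[symmetric]
      using assms(2) \<open>i < length la\<close> by (intro sum_strict_mono_ex1) auto
    then show False using that by simp
  qed
  ultimately show ?thesis by blast
qed


lemma sign_lemma:
  fixes k r D :: int
  assumes "0 \<le> r" "r < D" "D \<ge> 3"
  shows "0 \<le> (1-k)*(2*r - D*k) \<and> ((1-k)*(2*r - D*k) = 0 \<longrightarrow> k = 1 \<or> (k = 0 \<and> r = 0))"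
proof (cases "k \<le> 0")
  case True
  then have "D*k \<le> 0" using assms by (simp add: mult_nonneg_nonpos)
  then have B: "0 \<le> 2*r - D*k" using assms by linarith
  have A: "0 < 1 - k" using True by linarith
  have "0 \<le> (1-k)*(2*r - D*k)" using A B by simp
  moreover have "k = 0 \<and> r = 0" if "(1-k)*(2*r - D*k) = 0"
  proof -
    have "2*r - D*k = 0" using that A by simp
    then have "D*k = 0" "r = 0" using B \<open>D*k \<le> 0\<close> assms by linarith+
    then show ?thesis using assms by simp
  qed
  ultimately show ?thesis by blast
next
  case False
  show ?thesis
  proof (cases "k = 1")
    case True then show ?thesis by simp
  next
    case False2: False
    then have "k \<ge> 2" using False by linarith
    then have "D*k \<ge> D*2" using assms by (intro mult_left_mono) auto
    then have B: "2*r - D*k < 0" using assms by linarith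
    have A: "1 - k < 0" using \<open>k\<ge>2\<close> by linarith
    have "0 < (1-k)*(2*r - D*k)" using A B by (simp add: mult_neg_neg)
    then show ?thesis by (intro conjI impI; linarith)
  qed
qed

lemma GG_opt:
  fixes s d l :: nat
  assumes s2: "s \<ge> 2" and d1: "d \<ge> 1"
  defines "q \<equiv> (s-1) div (d+2)" and "r \<equiv> (s-1) mod (d+2)"
  shows "GG s d l \<le> GG s d (q+1) \<and> (GG s d l = GG s d (q+1) \<longrightarrow> l = q+1 \<or> (r = 0 \<and> l = q))"
proof -
  have sq: "s = (d+2)*q + r + 1" using s2 unfolding q_def r_def
    by (metis add.commute div_mult_mod_eq le_add_diff_inverse2 le_trans mult.commute one_le_numeral)
  have rl: "r < d+2" unfolding r_def by simp
  define k where "k = int l - int q"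
  have id: "GG s d (q+1) - GG s d l = (1-k)*(2*int r - int (d+2)*k)"
    unfolding GG_def k_def sq by (simp add: algebra_simps)
  have sg: "0 \<le> (1-k)*(2*int r - int (d+2)*k) \<and> ((1-k)*(2*int r - int (d+2)*k) = 0 \<longrightarrow> k = 1 \<or> (k = 0 \<and> int r = 0))"
    by (rule sign_lemma) (use rl d1 in auto)
  show ?thesis
  proof
    show "GG s d l \<le> GG s d (q+1)" using id sg by linarith
    show "GG s d l = GG s d (q+1) \<longrightarrow> l = q+1 \<or> (r = 0 \<and> l = q)"
      using id sg unfolding k_def by auto
  qed
qed


lemma mod_one_iff:
  fixes s n :: nat
  assumes "s \<ge> 1" "n \<ge> 2"
  shows "s mod n = 1 \<longleftrightarrow> (s-1) mod n = 0"
proof -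
  have "s = Suc (s-1)" using assms by simp
  then have "s mod n = (if Suc ((s-1) mod n) = n then 0 else Suc ((s-1) mod n))"
    by (metis mod_Suc)
  then show ?thesis using assms by auto
qed

theorem mainTheorem6:
  fixes s d :: nat
  assumes "d \<ge> 1" and "s \<ge> 2"
  shows "card {la \<in> core_dd s d. \<forall>mu \<in> core_dd s d. psize mu \<le> psize la}
           = (if s mod (d + 2) = 1 then 2 else 1)"
proof -
  define q where "q = (s-1) div (d+2)"
  define r where "r = (s-1) mod (d+2)"
  define m where "m = q + 1"
  have sq: "s = (d+2)*q + r + 1" using assms unfolding q_def r_def
    by (metis add.commute div_mult_mod_eq le_add_diff_inverse2 le_trans mult.commute one_le_numeral)
  have qr: "q + r \<ge> 1"
  proof (rule ccontr)
    assume "\<not> q + r \<ge> 1" then have "q = 0" "r = 0" by auto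
    then show False using sq assms by simp
  qed
  have fm: "m + (m-1)*d < s" unfolding m_def using sq qr by (simp add: algebra_simps; linarith)
  have fq: "q + (q-1)*d < s" if "r = 0"
  proof -
    have "(q-1)*d \<le> q*d" by simp
    then show ?thesis using sq that by (simp add: algebra_simps)
  qed
  have opt: "GG s d l \<le> GG s d m \<and> (GG s d l = GG s d m \<longrightarrow> l = m \<or> (r = 0 \<and> l = q))" for l
    using GG_opt[OF assms(2) assms(1), of l] unfolding m_def q_def r_def by simp
  have K: "2 * int (psize la) \<le> GG s d (length la) \<and>
           (2 * int (psize la) = GG s d (length la) \<longrightarrow> la = apf s d (length la))"
    if "la \<in> core_dd s d" for la
  proof -
    have cb: "length la + (length la - 1)*d < s" "\<forall>i<length la. la!i \<le> apf s d (length la) ! i"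
      using core_bound[OF assms(1) assms(2) that] by auto
    have pc: "psize la \<le> psize (apf s d (length la)) \<and>
        (psize la = psize (apf s d (length la)) \<longrightarrow> la = apf s d (length la))"
      using psize_cmp[of la "apf s d (length la)"] cb(2) by simp
    have "2 * int (psize (apf s d (length la))) = GG s d (length la)" using psize_ap[OF cb(1)] .
    then show ?thesis using pc by auto
  qed
  have Gm: "2 * int (psize (apf s d m)) = GG s d m" using psize_ap[OF fm] .
  have Sset: "{la \<in> core_dd s d. \<forall>mu \<in> core_dd s d. psize mu \<le> psize la}
      = (if r = 0 then {apf s d m, apf s d q} else {apf s d m})" (is "?S = ?T")
  proof
    show "?S \<subseteq> ?T"
    proof
      fix la assume "la \<in> ?S"
      then have mem: "la \<in> core_dd s d" and mx: "\<forall>mu \<in> core_dd s d. psize mu \<le> psize la" by auto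
      have "psize (apf s d m) \<le> psize la" using mx ap_core[OF fm] by blast
      then have "GG s d m \<le> 2 * int (psize la)" using Gm by linarith
      then have eq: "2 * int (psize la) = GG s d (length la)" "GG s d (length la) = GG s d m"
        using K[OF mem] opt[of "length la"] by linarith+
      then have "la = apf s d (length la)" using K[OF mem] by blast
      moreover have "length la = m \<or> (r = 0 \<and> length la = q)" using opt eq(2) by blast
      ultimately show "la \<in> ?T" by auto
    qed
    show "?T \<subseteq> ?S"
    proof
      fix la assume "la \<in> ?T"
      then have c: "la = apf s d m \<or> (r = 0 \<and> la = apf s d q)" by (auto split: if_splits)
      have mem: "la \<in> core_dd s d" using c ap_core[OF fm] ap_core[OF fq] by auto
      have val: "2 * int (psize la) = GG s d m"
      proof (cases "la = apf s d m")
        case True then show ?thesis using Gm by simp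
      next
        case False
        then have "r = 0" "la = apf s d q" using c by auto
        then have "2 * int (psize la) = GG s d q" using psize_ap[OF fq] by simp
        moreover have "GG s d q = GG s d m"
        proof -
          have "GG s d m - GG s d q = 0"
            using \<open>r=0\<close> unfolding GG_def m_def
            using sq by (simp add: algebra_simps)
          then show ?thesis by simp
        qed
        ultimately show ?thesis by simp
      qed
      have "\<forall>mu \<in> core_dd s d. psize mu \<le> psize la"
      proof
        fix mu assume "mu \<in> core_dd s d"
        then have "2 * int (psize mu) \<le> GG s d m" using K opt by (meson order_trans)
        then show "psize mu \<le> psize la" using val by linarith
      qed
      then show "la \<in> ?S" using mem by blast
    qed
  qed
  have neq: "apf s d m \<noteq> apf s d q"
  proof
    assume "apf s d m = apf s d q"
    then have "length (apf s d m) = length (apf s d q)" by simp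
    then show False unfolding m_def by simp
  qed
  have "s mod (d+2) = 1 \<longleftrightarrow> r = 0" unfolding r_def using mod_one_iff assms by simp
  then show ?thesis unfolding Sset using neq by auto
qed

end
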